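(* Let $a,q$ be positive integers with $q\ne1$ and $(a,q)=1$. Let $U=2^J\cdot3^3$ with $5\le J\ll1$ and $W=U\prod_{5\le p\le w}p$ with $10^{10^{10}}\le w\ll1$, and let $Wn+b$ be amenable. Let $V\ge1$ be an integer with $(q,V)=1$. Then $$\Bigg|\sum_{\substack{n\bmod q\\(WVn+b,q)=1\\(WVn+b-1,s(q))=1}}e\Big(\frac aqn\Big)\Bigg|\le\tau(q)\cdot1_{(q,W)=1}.$$
   Context: $e(t)=e^{2\pi it}$, $\tau$ is the divisor function. $s(n)=\prod_{p\mid n,\ p\equiv-1\ (4),\ p\ne3}p$. A linear polynomial $Kn+b$ ($K\ge1$) is amenable if (i) $6^3\mid K$; (ii) $(b,K)=(b-1,s(K))=1$; (iii) $b-1=2^j3^{2t}(4h+1)$ for some $h\in\mathbb{Z}$ with $3\nmid4h+1$ and $j,t\ge0$ with $2^{j+2}3^{2t+1}\mid K$. *)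

theory Defs
  imports "HOL-Analysis.Analysis" "HOL-Computational_Algebra.Primes"
begin

definition e :: "real \<Rightarrow> complex" where
  "e t = exp (2 * pi * \<i> * complex_of_real t)"

definition divisor_count :: "nat \<Rightarrow> nat" where
  "divisor_count n = card {d. d dvd n}"

definition s_fun :: "nat \<Rightarrow> nat" where
  "s_fun n = (\<Prod>p\<in>{p. prime p \<and> p dvd n \<and> p mod 4 = 3 \<and> p \<noteq> 3}. p)"

definition amenable :: "int \<Rightarrow> int \<Rightarrow> bool" where
  "amenable K b \<longleftrightarrow> K \<ge> 1 \<and> 6^3 dvd K \<and> coprime b K \<and>
     coprime (b - 1) (int (s_fun (nat K))) \<and>
     (\<exists>h::int. \<exists>j t::nat. b - 1 = 2^j * 3^(2*t) * (4*h+1) \<and> \<not> 3 dvd (4*h+1)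
        \<and> 2^(j+2) * 3^(2*t+1) dvd K)"

end

theory Submission imports Defs begin

lemma e_add: "e (x + y) = e x * e y"
  unfolding e_def by (simp add: distrib_left exp_add)

lemma e_int: "e (real_of_int k) = 1"
proof -
  have "2 * complex_of_real pi * \<i> * complex_of_real (real_of_int k) = (2 * of_int k * pi) * \<i>"
    by simp
  then show ?thesis unfolding e_def using exp_integer_2pi[of "of_int k"] by (simp add: mult_ac)
qed

lemma e_eq_1: assumes "e t = 1" shows "\<exists>k::int. t = of_int k"
proof -
  from assms have "exp (2 * pi * \<i> * complex_of_real t) = 1" by (simp add: e_def)
  then obtain n :: int where "Im (2 * pi * \<i> * complex_of_real t) = of_int (2*n) * pi"
    unfolding exp_eq_1 by blast
  then have "2 * pi * t = 2 * n * pi" by simp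
  then have "t = n" by simp
  then show ?thesis by blast
qed

lemma shift_sum_int:
  fixes h :: "int \<Rightarrow> complex" and q L :: int
  assumes "0 \<le> L" "L \<le> q" "\<And>n. h (n + q) = h n"
  shows "(\<Sum>n\<in>{0..<q}. h (n + L)) = (\<Sum>n\<in>{0..<q}. h n)"
proof -
  have "(\<Sum>n\<in>{0..<q}. h (n + L)) = (\<Sum>n\<in>(\<lambda>n. n + L) ` {0..<q}. h n)"
    by (subst sum.reindex) (auto simp: inj_on_def)
  also have "(\<lambda>n. n + L) ` {0..<q} = {L..<q} \<union> {q..<q+L}"
  proof -
    have "(\<lambda>n. n + L) ` {0..<q} = {L..<q+L}"
      by simp
    then show ?thesis using assms by auto
  qed
  also have "(\<Sum>n\<in>{L..<q} \<union> {q..<q+L}. h n) = (\<Sum>n\<in>{L..<q}. h n) + (\<Sum>n\<in>{q..<q+L}. h n)"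
    by (rule sum.union_disjoint) auto
  also have "(\<Sum>n\<in>{q..<q+L}. h n) = (\<Sum>n\<in>(\<lambda>n. n + q) ` {0..<L}. h n)"
  proof -
    have "(\<lambda>n. n + q) ` {0..<L} = {q..<q+L}"
      by (simp add: add.commute)
    then show ?thesis by simp
  qed
  also have "\<dots> = (\<Sum>n\<in>{0..<L}. h (n + q))"
    by (subst sum.reindex) (auto simp: inj_on_def)
  also have "\<dots> = (\<Sum>n\<in>{0..<L}. h n)" using assms by simp
  also have "(\<Sum>n\<in>{L..<q}. h n) + (\<Sum>n\<in>{0..<L}. h n) = (\<Sum>n\<in>{0..<L} \<union> {L..<q}. h n)"
    by (subst sum.union_disjoint) auto
  also have "{0..<L} \<union> {L..<q} = {0..<q}" using assms by auto
  finally show ?thesis .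
qed

lemma periodic_mult:
  fixes g :: "int \<Rightarrow> 'a"
  assumes "\<And>n. g (n + L) = g n"
  shows "g (n + L * int k) = g n"
proof (induction k)
  case (Suc k)
  have "g (n + L * int (Suc k)) = g ((n + L * int k) + L)" by (simp add: algebra_simps)
  then show ?case using Suc assms by simp
qed simp

lemma shift_zero:
  fixes q L \<alpha> :: int and g :: "int \<Rightarrow> complex"
  assumes "0 < L" "L < q" "L dvd q" "coprime \<alpha> q" "\<And>n. g (n + L) = g n"
  shows "(\<Sum>n\<in>{0..<q}. g n * e (real_of_int \<alpha> / real_of_int q * real_of_int n)) = 0"
proof -
  define h where "h n = g n * e (real_of_int \<alpha> / real_of_int q * real_of_int n)" for n
  obtain k where k: "q = L * k" using assms(3) by blast
  have "k \<ge> 0" using k assms(1,2) by (smt (verit) zero_less_mult_iff)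
  then have kk: "q = L * int (nat k)" using k by simp
  have gq: "g (n + q) = g n" for n
    using periodic_mult[of g L n "nat k", OF assms(5)] kk by simp
  have qnz: "real_of_int q \<noteq> 0" using assms by simp
  have hq: "h (n + q) = h n" for n
  proof -
    have "real_of_int \<alpha> / real_of_int q * real_of_int (n + q) = real_of_int \<alpha> / real_of_int q * real_of_int n + real_of_int \<alpha>"
      using qnz by (simp add: field_simps)
    then show ?thesis unfolding h_def using gq e_add e_int by simp
  qed
  define c where "c = e (real_of_int \<alpha> / real_of_int q * real_of_int L)"
  have hL: "h (n + L) = c * h n" for n
  proof -
    have "real_of_int \<alpha> / real_of_int q * real_of_int (n + L) = real_of_int \<alpha> / real_of_int q * real_of_int n + real_of_int \<alpha> / real_of_int q * real_of_int L"
      by (simp add: algebra_simps add_divide_distrib)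
    then show ?thesis unfolding h_def c_def using assms(5) e_add by simp
  qed
  have "(\<Sum>n\<in>{0..<q}. h n) = (\<Sum>n\<in>{0..<q}. h (n + L))"
    using shift_sum_int[of L q h] hq assms by simp
  also have "\<dots> = c * (\<Sum>n\<in>{0..<q}. h n)" by (simp add: hL sum_distrib_left)
  finally have eq: "(1 - c) * (\<Sum>n\<in>{0..<q}. h n) = 0" by (simp add: algebra_simps)
  have "c \<noteq> 1"
  proof
    assume "c = 1"
    then obtain m :: int where m: "real_of_int \<alpha> / real_of_int q * real_of_int L = of_int m"
      using e_eq_1 unfolding c_def by blast
    then have "real_of_int (\<alpha> * L) = real_of_int (m * q)" using qnz by (simp add: field_simps)
    then have "\<alpha> * L = m * q" by linarith
    then have "q dvd \<alpha> * L" by simp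
    then have "q dvd L" using assms(4) by (simp add: coprime_commute coprime_dvd_mult_right_iff)
    then show False using assms(1,2) by (meson zdvd_imp_le not_le)
  qed
  then show ?thesis using eq unfolding h_def by simp
qed


lemma norm_e [simp]: "norm (e t) = 1"
proof -
  have "e t = exp (\<i> * of_real (2 * pi * t))" unfolding e_def by (simp add: mult_ac)
  then show ?thesis by simp
qed

lemma coprime_char:
  fixes x y :: int
  assumes "y \<noteq> 0"
  shows "coprime x y \<longleftrightarrow> (\<forall>p. prime p \<and> p dvd y \<longrightarrow> \<not> p dvd x)"
proof
  assume "coprime x y"
  then show "\<forall>p. prime p \<and> p dvd y \<longrightarrow> \<not> p dvd x"
    using coprime_common_divisor not_prime_unit by blast
next
  assume H: "\<forall>p. prime p \<and> p dvd y \<longrightarrow> \<not> p dvd x"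
  show "coprime x y"
  proof (rule ccontr)
    assume "\<not> coprime x y"
    then have "\<not> is_unit (gcd x y)" by (simp add: coprime_iff_gcd_eq_1)
    moreover have "gcd x y \<noteq> 0" using assms by simp
    ultimately obtain p where "p dvd gcd x y" "prime p" using prime_divisor_exists by blast
    then show False using H by auto
  qed
qed

lemma prime_dvd_prod_set:
  fixes A :: "int set"
  assumes "finite A" "\<forall>p\<in>A. prime p" "prime r"
  shows "r dvd \<Prod>A \<longleftrightarrow> r \<in> A"
proof
  assume "r dvd \<Prod>A"
  then obtain y where "y \<in> A" "r dvd y" using prime_dvd_prod_iff[OF assms(1,3), of id] by auto
  then show "r \<in> A" using assms primes_dvd_imp_eq by blast
next
  assume "r \<in> A" then show "r dvd \<Prod>A" using assms(1) by (metis dvd_triv_left prod.remove)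
qed

lemma primes_prod_dvd:
  fixes A :: "int set"
  assumes "finite A" "\<forall>p\<in>A. prime p" "\<forall>p\<in>A. p dvd x"
  shows "\<Prod>A dvd x"
  using assms
proof (induction A rule: finite_induct)
  case empty then show ?case by simp
next
  case (insert p F)
  have "\<not> p dvd \<Prod>F" using prime_dvd_prod_set[of F p] insert by auto
  then have "coprime p (\<Prod>F)" using insert by (simp add: prime_imp_coprime)
  then show ?case using insert by (simp add: divides_mult)
qed

lemma prod_primes_pos:
  fixes A :: "int set"
  assumes "\<forall>p\<in>A. prime p"
  shows "\<Prod>A > 0"
  using assms by (intro prod_pos) (auto simp: prime_gt_0_int)

lemma incl_excl_ind:
  fixes P :: "'a set" and R :: "'a \<Rightarrow> bool"
  assumes "finite P"
  shows "(if \<forall>p\<in>P. \<not> R p then 1 else 0 :: complex)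
       = (\<Sum>A\<in>Pow P. (-1) ^ card A * (if \<forall>p\<in>A. R p then 1 else 0))"
proof -
  define D where "D = {p\<in>P. R p}"
  have fD: "finite D" using assms D_def by simp
  have "(\<Sum>A\<in>Pow P. (-1) ^ card A * (if \<forall>p\<in>A. R p then 1 else 0 :: complex))
      = (\<Sum>A\<in>{A\<in>Pow P. A \<subseteq> D}. (-1) ^ card A)"
  proof -
    have "(\<Sum>A\<in>Pow P. (-1) ^ card A * (if \<forall>p\<in>A. R p then 1 else 0 :: complex))
      = (\<Sum>A\<in>Pow P. if A \<subseteq> D then (-1) ^ card A else 0)"
      by (rule sum.cong) (auto simp: D_def)
    also have "\<dots> = (\<Sum>A\<in>{A\<in>Pow P. A \<subseteq> D}. (-1) ^ card A)"
      by (rule sum.inter_filter[symmetric]) (use assms in simp)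
    finally show ?thesis .
  qed
  also have "{A\<in>Pow P. A \<subseteq> D} = Pow D" by (auto simp: D_def)
  also have "(\<Sum>A\<in>Pow D. (-1) ^ card A :: complex) = (\<Prod>x\<in>D. 1 - 1)"
    using prod_diff_conv_sum[OF fD, of "\<lambda>_. 1 :: complex" "\<lambda>_. 1"] by simp
  also have "\<dots> = (if D = {} then 1 else 0)" using fD by auto
  also have "(D = {}) = (\<forall>p\<in>P. \<not> R p)" by (auto simp: D_def)
  finally show ?thesis ..
qed


theorem lemma5:
  fixes a :: int and q :: nat and J :: nat and w :: nat and V :: nat and b :: int
    and U W :: int
  assumes "a > 0" and "q > 0" and "q \<noteq> 1" and "coprime a (int q)"
    and "U = 2^J * 3^3" and "J \<ge> 5"
    and "W = U * (\<Prod>p\<in>{p. prime p \<and> 5 \<le> p \<and> p \<le> w}. int p)"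
    and "w \<ge> 10^(10^10)"
    and "amenable W b"
    and "V \<ge> 1" and "coprime q V"
  shows "norm (\<Sum>n\<in>{n\<in>{0..<int q}. coprime (W * int V * n + b) (int q)
                 \<and> coprime (W * int V * n + b - 1) (int (s_fun q))}.
              e (real_of_int a / real q * real_of_int n))
         \<le> real (divisor_count q) * (if coprime (int q) W then 1 else 0)"
proof -
  define qi where "qi = int q"
  define c where "c = W * int V"
  define E where "E n = e (real_of_int a / real_of_int qi * real_of_int n)" for n
  define s where "s = int (s_fun q)"
  define P where "P = {p::int. prime p \<and> p dvd qi}"
  define Q where "Q = {p::int. prime p \<and> p dvd s}"
  define chi where "chi n \<longleftrightarrow> (\<forall>p\<in>P. \<not> p dvd c*n+b) \<and> (\<forall>p\<in>Q. \<not> p dvd c*n+b-1)" for n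
  have qi_pos: "qi > 0" using assms(2) by (simp add: qi_def)
  have s_pos: "s > 0"
  proof -
    have "s_fun q > 0" unfolding s_fun_def by (rule prod_pos) (simp add: prime_gt_0_nat)
    then show ?thesis by (simp add: s_def)
  qed
  have W_pos: "W \<ge> 1" using assms(9) by (simp add: amenable_def)
  have finP: "finite P"
  proof (rule finite_subset)
    show "P \<subseteq> {0..qi}" using qi_pos by (auto simp: P_def prime_gt_0_int zdvd_imp_le less_imp_le)
  qed simp
  have QP: "Q \<subseteq> P"
  proof
    fix p assume "p \<in> Q"
    then have pp: "prime p" and pd: "p dvd int (s_fun q)" by (auto simp: Q_def s_def)
    define pn where "pn = nat p"
    have ppos: "p > 0" using pp by (simp add: prime_gt_0_int)
    then have p_eq: "p = int pn" by (simp add: pn_def)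
    have ppn: "prime pn" using pp p_eq by simp
    define S' where "S' = {p. prime p \<and> p dvd q \<and> p mod 4 = 3 \<and> p \<noteq> 3}"
    have finS: "finite S'"
      by (rule finite_subset[of _ "{..q}"]) (use assms(2) in \<open>auto simp: S'_def dvd_imp_le\<close>)
    have "pn dvd \<Prod>S'" using pd unfolding s_fun_def S'_def by (simp only: p_eq of_nat_dvd_iff)
    then obtain x where "x \<in> S'" "pn dvd x" using prime_dvd_prod_iff[OF finS ppn, of id] by auto
    then have "pn = x" using ppn by (auto simp: S'_def primes_dvd_imp_eq)
    then have "pn dvd q" using \<open>x \<in> S'\<close> by (simp add: S'_def)
    then show "p \<in> P" using pp p_eq by (simp add: P_def qi_def)
  qed
  have finQ: "finite Q" using QP finP finite_subset by blast
  have Pprime: "\<forall>p\<in>P. prime p" and Pdvd: "\<forall>p\<in>P. p dvd qi" by (auto simp: P_def)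
  have chi_eq: "(coprime (c*n+b) qi \<and> coprime (c*n+b-1) s) \<longleftrightarrow> chi n" for n
    using coprime_char[of qi "c*n+b"] coprime_char[of s "c*n+b-1"] qi_pos s_pos
    by (auto simp: chi_def P_def Q_def)
  have S_eq: "(\<Sum>n\<in>{n\<in>{0..<int q}. coprime (W * int V * n + b) (int q)
                 \<and> coprime (W * int V * n + b - 1) (int (s_fun q))}.
              e (real_of_int a / real q * real_of_int n))
        = (\<Sum>n\<in>{0..<qi}. (if chi n then 1 else 0) * E n)"
  proof -
    have "(\<Sum>n\<in>{n\<in>{0..<int q}. coprime (W * int V * n + b) (int q)
                 \<and> coprime (W * int V * n + b - 1) (int (s_fun q))}.
              e (real_of_int a / real q * real_of_int n))
       = (\<Sum>n\<in>{0..<qi}. if coprime (c*n+b) qi \<and> coprime (c*n+b-1) s then E n else 0)"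
      by (subst sum.inter_filter) (auto simp: qi_def c_def s_def E_def intro!: sum.cong)
    also have "\<dots> = (\<Sum>n\<in>{0..<qi}. (if chi n then 1 else 0) * E n)"
      by (intro sum.cong refl) (simp add: chi_eq)
    finally show ?thesis .
  qed
  have chi_per: "chi (n + L) = chi n" if "\<forall>p\<in>P. p dvd c*L" for n L
  proof -
    have "c*(n+L)+b = (c*n+b) + c*L" "c*(n+L)+b-1 = (c*n+b-1) + c*L" by (simp_all add: algebra_simps)
    then show ?thesis using that QP unfolding chi_def
      by (metis (no_types, lifting) dvd_add_left_iff subsetD)
  qed
  have a_cop: "coprime a qi" using assms(4) by (simp add: qi_def)
  show ?thesis
  proof (cases "coprime (int q) W")
    case False
    then obtain p where pp: "prime p" and pW: "p dvd W" and pq: "p dvd qi"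
      using coprime_char[of W "int q"] W_pos by (auto simp: qi_def)
    define G where "G = gcd c qi"
    have "p dvd G" using pW pq by (simp add: G_def c_def)
    have Gpos: "G > 0" using qi_pos by (simp add: G_def)
    have "p \<le> G" using \<open>p dvd G\<close> Gpos by (simp add: zdvd_imp_le)
    then have G2: "G \<ge> 2" using prime_ge_2_int[OF pp] by simp
    obtain L where qL: "qi = G * L" using G_def by (metis gcd_dvd2 dvdE)
    have Lpos: "L > 0" using qL qi_pos Gpos by (simp add: zero_less_mult_iff)
    have "2 * L \<le> G * L" using G2 Lpos by (intro mult_right_mono) auto
    then have Llt: "L < qi" using qL Lpos by linarith
    have Ldvd: "L dvd qi" using qL by simp
    obtain c' where cc: "c = G * c'" using G_def by (metis gcd_dvd1 dvdE)
    have "c * L = c' * qi" using cc qL by (simp add: algebra_simps)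
    then have cL: "\<forall>p\<in>P. p dvd c*L" using Pdvd by simp
    have "(\<Sum>n\<in>{0..<qi}. (if chi n then 1 else 0) * E n) = 0"
      unfolding E_def
      by (rule shift_zero[OF Lpos Llt Ldvd a_cop]) (use chi_per[OF cL] in simp)
    then show ?thesis using S_eq False by simp
  next
    case True
    have c_cop: "coprime c qi"
      using True assms(11) by (simp add: c_def qi_def coprime_commute)
    have nodvd_c: "\<not> p dvd c" if "p \<in> P" for p
      using that c_cop coprime_char[of qi c] qi_pos by (auto simp: P_def)
    define G where "G A B n = (if (\<forall>p\<in>A. p dvd c*n+b) \<and> (\<forall>p\<in>B. p dvd c*n+b-1) then 1 else 0 :: complex)" for A B n
    have ind: "(if chi n then 1 else 0 :: complex)
        = (\<Sum>A\<in>Pow P. \<Sum>B\<in>Pow Q. ((-1) ^ card A * (-1) ^ card B) * G A B n)" for n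
    proof -
      have "(if chi n then 1 else 0 :: complex)
          = (if \<forall>p\<in>P. \<not> p dvd c*n+b then 1 else 0) * (if \<forall>p\<in>Q. \<not> p dvd c*n+b-1 then 1 else 0)"
        by (simp add: chi_def)
      also have "\<dots> = (\<Sum>A\<in>Pow P. (-1) ^ card A * (if \<forall>p\<in>A. p dvd c*n+b then 1 else 0))
                     * (\<Sum>B\<in>Pow Q. (-1) ^ card B * (if \<forall>p\<in>B. p dvd c*n+b-1 then 1 else 0))"
        using incl_excl_ind[OF finP] incl_excl_ind[OF finQ] by simp
      also have "\<dots> = (\<Sum>A\<in>Pow P. \<Sum>B\<in>Pow Q. ((-1) ^ card A * (if \<forall>p\<in>A. p dvd c*n+b then 1 else 0))
                     * ((-1) ^ card B * (if \<forall>p\<in>B. p dvd c*n+b-1 then 1 else 0)))"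
        by (rule sum_product)
      also have "\<dots> = (\<Sum>A\<in>Pow P. \<Sum>B\<in>Pow Q. ((-1) ^ card A * (-1) ^ card B) * G A B n)"
        by (intro sum.cong refl) (simp add: G_def)
      finally show ?thesis .
    qed
    define T where "T A B = (\<Sum>n\<in>{0..<qi}. G A B n * E n)" for A B
    have S2: "(\<Sum>n\<in>{0..<qi}. (if chi n then 1 else 0) * E n)
        = (\<Sum>A\<in>Pow P. \<Sum>B\<in>Pow Q. ((-1) ^ card A * (-1) ^ card B) * T A B)"
    proof -
      have "(\<Sum>n\<in>{0..<qi}. (if chi n then 1 else 0) * E n)
          = (\<Sum>n\<in>{0..<qi}. \<Sum>A\<in>Pow P. \<Sum>B\<in>Pow Q. ((-1) ^ card A * (-1) ^ card B) * (G A B n * E n))"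
        by (simp add: ind sum_distrib_right mult.assoc)
      also have "\<dots> = (\<Sum>A\<in>Pow P. \<Sum>B\<in>Pow Q. \<Sum>n\<in>{0..<qi}. ((-1) ^ card A * (-1) ^ card B) * (G A B n * E n))"
        by (subst sum.swap) (simp add: sum.swap[of _ "{0..<qi}"])
      also have "\<dots> = (\<Sum>A\<in>Pow P. \<Sum>B\<in>Pow Q. ((-1) ^ card A * (-1) ^ card B) * T A B)"
        by (simp add: T_def sum_distrib_left)
      finally show ?thesis .
    qed
    have Tb: "norm (T A B) \<le> (if A \<inter> B = {} \<and> \<Prod>(A \<union> B) = qi then 1 else 0)"
      if AP: "A \<in> Pow P" and BQ: "B \<in> Pow Q" for A B
    proof -
      have AP': "A \<subseteq> P" and BP: "B \<subseteq> P" using AP BQ QP by auto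
      have finA: "finite A" and finB: "finite B" using AP' BP finP finite_subset by auto
      have ABpr: "\<forall>p\<in>A \<union> B. prime p" using AP' BP Pprime by auto
      show ?thesis
      proof (cases "A \<inter> B = {}")
        case False
        then obtain p where "p \<in> A" "p \<in> B" by auto
        then have pp: "prime p" using ABpr by auto
        have "G A B n = 0" for n
        proof -
          have "\<not> (p dvd c*n+b \<and> p dvd c*n+b-1)"
          proof
            assume "p dvd c*n+b \<and> p dvd c*n+b-1"
            then have "p dvd (c*n+b) - (c*n+b-1)" using dvd_diff by blast
            then have "p dvd 1" by simp
            then show False using pp by (simp add: not_prime_unit)
          qed
          then show ?thesis using \<open>p \<in> A\<close> \<open>p \<in> B\<close> by (auto simp: G_def)
        qed
        then have "T A B = 0" by (simp add: T_def)
        then show ?thesis by simp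
      next
        case disj: True
        define L where "L = \<Prod>(A \<union> B)"
        have Lpos: "L > 0" unfolding L_def using prod_primes_pos ABpr by blast
        have Ldvd: "L dvd qi" unfolding L_def
          by (rule primes_prod_dvd) (use finA finB ABpr AP' BP Pdvd in auto)
        have pL: "p dvd L" if "p \<in> A \<union> B" for p
          unfolding L_def using that finA finB by (metis dvd_triv_left finite_UnI prod.remove)
        show ?thesis
        proof (cases "L = qi")
          case False
          have Llt: "L < qi" using Ldvd False qi_pos zdvd_imp_le by fastforce
          have Gper: "G A B (n + L) = G A B n" for n
          proof -
            have "c*(n+L)+b = (c*n+b) + c*L" "c*(n+L)+b-1 = (c*n+b-1) + c*L" by (simp_all add: algebra_simps)
            moreover have "\<forall>p\<in>A \<union> B. p dvd c*L" using pL by simp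
            ultimately show ?thesis unfolding G_def
              by (metis (no_types, lifting) Un_iff dvd_add_left_iff)
          qed
          have "T A B = 0" unfolding T_def E_def
            by (rule shift_zero[OF Lpos Llt Ldvd a_cop]) (use Gper in simp)
          then show ?thesis by simp
        next
          case True
          define N where "N = {n\<in>{0..<qi}. (\<forall>p\<in>A. p dvd c*n+b) \<and> (\<forall>p\<in>B. p dvd c*n+b-1)}"
          have "norm (T A B) \<le> (\<Sum>n\<in>{0..<qi}. norm (G A B n * E n))"
            unfolding T_def by (rule norm_sum)
          also have "\<dots> = (\<Sum>n\<in>{0..<qi}. if (\<forall>p\<in>A. p dvd c*n+b) \<and> (\<forall>p\<in>B. p dvd c*n+b-1) then 1 else 0)"
            by (intro sum.cong refl) (simp add: G_def E_def norm_mult)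
          also have "\<dots> = real (card N)"
            unfolding N_def by (subst sum.inter_filter[symmetric]) simp_all
          also have "card N \<le> 1"
          proof -
            have "n1 = n2" if n1: "n1 \<in> N" and n2: "n2 \<in> N" for n1 n2
            proof -
              have "p dvd n1 - n2" if pAB: "p \<in> A \<union> B" for p
              proof -
                have "p dvd c * (n1 - n2)"
                proof (cases "p \<in> A")
                  case True
                  then have "p dvd c*n1+b" "p dvd c*n2+b" using n1 n2 by (auto simp: N_def)
                  then have "p dvd (c*n1+b) - (c*n2+b)" by (rule dvd_diff)
                  moreover have "(c*n1+b) - (c*n2+b) = c * (n1 - n2)" by (simp add: algebra_simps)
                  ultimately show ?thesis by simp
                next
                  case False
                  then have "p \<in> B" using pAB by simp
                  then have "p dvd c*n1+b-1" "p dvd c*n2+b-1" using n1 n2 by (auto simp: N_def)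
                  then have "p dvd (c*n1+b-1) - (c*n2+b-1)" by (rule dvd_diff)
                  moreover have "(c*n1+b-1) - (c*n2+b-1) = c * (n1 - n2)" by (simp add: algebra_simps)
                  ultimately show ?thesis by simp
                qed
                moreover have "prime p" "\<not> p dvd c" using pAB ABpr AP' BP nodvd_c by auto
                ultimately show ?thesis by (simp add: prime_dvd_mult_iff)
              qed
              then have "L dvd n1 - n2" unfolding L_def
                by (intro primes_prod_dvd) (use finA finB ABpr in auto)
              then have "qi dvd n1 - n2" using True by simp
              moreover have "\<bar>n1 - n2\<bar> < qi" using n1 n2 by (auto simp: N_def)
              ultimately show "n1 = n2"
                using dvd_imp_le_int[of "n1 - n2" qi] qi_pos by fastforce
            qed
            moreover have "finite N" unfolding N_def by (rule finite_subset[of _ "{0..<qi}"]) auto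
            ultimately show ?thesis using card_le_Suc0_iff_eq by (metis One_nat_def)
          qed
          finally show ?thesis using disj True L_def by simp
        qed
      qed
    qed
    define K where "K = {AB \<in> Pow P \<times> Pow Q. fst AB \<inter> snd AB = {} \<and> \<Prod>(fst AB \<union> snd AB) = qi}"
    have "norm (\<Sum>n\<in>{0..<qi}. (if chi n then 1 else 0) * E n)
        \<le> (\<Sum>A\<in>Pow P. norm (\<Sum>B\<in>Pow Q. ((-1) ^ card A * (-1) ^ card B) * T A B))"
      unfolding S2 by (rule norm_sum)
    also have "\<dots> \<le> (\<Sum>A\<in>Pow P. \<Sum>B\<in>Pow Q. norm (((-1) ^ card A * (-1) ^ card B) * T A B))"
      by (intro sum_mono norm_sum)
    also have "\<dots> = (\<Sum>A\<in>Pow P. \<Sum>B\<in>Pow Q. norm (T A B))"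
      by (simp add: norm_mult norm_power)
    also have "\<dots> \<le> (\<Sum>A\<in>Pow P. \<Sum>B\<in>Pow Q. (if A \<inter> B = {} \<and> \<Prod>(A \<union> B) = qi then 1 else 0))"
      by (intro sum_mono Tb)
    also have "\<dots> = (\<Sum>AB\<in>Pow P \<times> Pow Q. (if fst AB \<inter> snd AB = {} \<and> \<Prod>(fst AB \<union> snd AB) = qi then 1 else 0))"
      by (subst sum.cartesian_product) (simp add: case_prod_beta)
    also have "\<dots> = real (card K)"
      unfolding K_def by (subst sum.inter_filter[symmetric]) (simp_all add: finP finQ)
    also have "card K \<le> divisor_count q"
    proof -
      define f where "f AB = nat (\<Prod>(fst AB))" for AB :: "int set \<times> int set"
      have "inj_on f K"
      proof
        fix x y assume x: "x \<in> K" and y: "y \<in> K" and fxy: "f x = f y"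
        obtain A1 B1 where x_eq: "x = (A1, B1)" by (cases x)
        obtain A2 B2 where y_eq: "y = (A2, B2)" by (cases y)
        have h1: "A1 \<subseteq> P" "B1 \<subseteq> P" "A1 \<inter> B1 = {}" "\<Prod>(A1 \<union> B1) = qi"
          using x x_eq QP by (auto simp: K_def)
        have h2: "A2 \<subseteq> P" "B2 \<subseteq> P" "A2 \<inter> B2 = {}" "\<Prod>(A2 \<union> B2) = qi"
          using y y_eq QP by (auto simp: K_def)
        have fin: "finite A1" "finite B1" "finite A2" "finite B2"
          using h1 h2 finP finite_subset by auto
        have pr: "\<forall>p\<in>A1. prime p" "\<forall>p\<in>B1. prime p" "\<forall>p\<in>A2. prime p" "\<forall>p\<in>B2. prime p"
          using h1 h2 Pprime by auto
        have pos1: "\<Prod>A1 > 0" "\<Prod>A2 > 0" using pr prod_primes_pos by auto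
        have eqA: "\<Prod>A1 = \<Prod>A2" using fxy pos1 by (simp add: f_def x_eq y_eq)
        have setEq: "X = Y" if "finite X" "finite Y" "\<forall>p\<in>X. prime p" "\<forall>p\<in>Y. prime p" "\<Prod>X = \<Prod>Y"
          for X Y :: "int set"
          using that prime_dvd_prod_set by (metis subsetI subset_antisym)
        have A_eq: "A1 = A2" using setEq fin pr eqA by blast
        have "\<Prod>A1 * \<Prod>B1 = \<Prod>A2 * \<Prod>B2"
          using h1 h2 fin by (simp add: prod.union_disjoint)
        then have "\<Prod>B1 = \<Prod>B2" using A_eq pos1 by simp
        then have "B1 = B2" using setEq fin pr by blast
        then show "x = y" using A_eq x_eq y_eq by simp
      qed
      moreover have "f ` K \<subseteq> {d. d dvd q}"
      proof
        fix d assume "d \<in> f ` K"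
        then obtain A B where AB: "(A, B) \<in> K" and d: "d = nat (\<Prod>A)" by (auto simp: f_def)
        have "A \<subseteq> P" "finite A" using AB finP finite_subset by (auto simp: K_def)
        then have "\<Prod>A dvd qi" using Pprime Pdvd by (intro primes_prod_dvd) auto
        moreover have "\<Prod>A > 0" using \<open>A \<subseteq> P\<close> Pprime prod_primes_pos by blast
        ultimately have "int d dvd int q" using d by (simp add: qi_def)
        then show "d \<in> {d. d dvd q}" by simp
      qed
      moreover have "finite {d. d dvd q}" using assms(2) by simp
      ultimately show ?thesis unfolding divisor_count_def by (rule card_inj_on_le)
    qed
    finally show ?thesis using S_eq True by simp
  qed
qed

end
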